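(* Let $G$ and $H$ be Polish groups such that $G$ has the Rosendal property. Let $\varphi:G\to H$ be a continuous homomorphism with $\varphi(G)\neq\{1_H\}$. Let $E$ be an equivalence relation on $G$ such that for every infinite set $I\subseteq\mathbb{N}$ the set $$Q_I=\{g\in G:\text{there is a strictly increasing sequence }(k_n)_{n\ge1}\text{ in } I \text{ with } \varphi(g)^{k_n}\to 1_H\}$$ is $E$-invariant. Then every equivalence class of $E$ that is dense in $G$ is meager. In particular, $E$ does not have a comeager class.
   Context: A Polish group $G$ has the Rosendal property if for every infinite set $I\subseteq\mathbb{N}$ and every neighbourhood $V$ of $1$ in $G$, the set $\{g\in G:\text{there is } n\in I \text{ with } g^n\in V\}$ is dense in $G$. A set is $E$-invariant if it is a union of $E$-classes. *)

theory Defs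
  imports "HOL-Analysis.Analysis" "HOL-Algebra.Group"
begin

definition Polish_space :: "'a topology \<Rightarrow> bool" where
  "Polish_space X \<longleftrightarrow> completely_metrizable_space X \<and> separable_space X"

definition topological_group :: "('a, 'm) monoid_scheme \<Rightarrow> 'a topology \<Rightarrow> bool" where
  "topological_group G T \<longleftrightarrow> group G \<and> topspace T = carrier G
     \<and> continuous_map (prod_topology T T) T (\<lambda>(x, y). x \<otimes>\<^bsub>G\<^esub> y)
     \<and> continuous_map T T (\<lambda>x. inv\<^bsub>G\<^esub> x)"

definition Polish_group :: "('a, 'm) monoid_scheme \<Rightarrow> 'a topology \<Rightarrow> bool" where
  "Polish_group G T \<longleftrightarrow> topological_group G T \<and> Polish_space T"

definition neighbourhood :: "'a topology \<Rightarrow> 'a set \<Rightarrow> 'a \<Rightarrow> bool" where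
  "neighbourhood T V x \<longleftrightarrow> V \<subseteq> topspace T \<and> (\<exists>U. openin T U \<and> x \<in> U \<and> U \<subseteq> V)"

definition Rosendal_property :: "('a, 'm) monoid_scheme \<Rightarrow> 'a topology \<Rightarrow> bool" where
  "Rosendal_property G T \<longleftrightarrow>
     (\<forall>I :: nat set. \<forall>V. infinite I \<and> neighbourhood T V \<one>\<^bsub>G\<^esub> \<longrightarrow>
        T closure_of {g \<in> carrier G. \<exists>n\<in>I. g [^]\<^bsub>G\<^esub> n \<in> V} = topspace T)"

definition nowhere_dense :: "'a topology \<Rightarrow> 'a set \<Rightarrow> bool" where
  "nowhere_dense T A \<longleftrightarrow> T interior_of (T closure_of A) = {}"

definition meager :: "'a topology \<Rightarrow> 'a set \<Rightarrow> bool" where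
  "meager T A \<longleftrightarrow> (\<exists>\<F>. countable \<F> \<and> (\<forall>N\<in>\<F>. nowhere_dense T N) \<and> A \<subseteq> \<Union>\<F>)"

definition comeager :: "'a topology \<Rightarrow> 'a set \<Rightarrow> bool" where
  "comeager T A \<longleftrightarrow> A \<subseteq> topspace T \<and> meager T (topspace T - A)"

definition E_invariant :: "'a set \<Rightarrow> ('a \<times> 'a) set \<Rightarrow> 'a set \<Rightarrow> bool" where
  "E_invariant X E A \<longleftrightarrow> (\<exists>\<C> \<subseteq> X // E. A = \<Union>\<C>)"

end

theory Submission
  imports Defs
begin

lemma tg_pow_cont:
  assumes "topological_group G T"
  shows "continuous_map T T (\<lambda>g. g [^]\<^bsub>G\<^esub> (n::nat))"
proof (induction n)
  case 0
  have "group G" and "topspace T = carrier G" using assms by (auto simp: topological_group_def)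
  then show ?case by (simp add: group.is_monoid monoid.one_closed)
next
  case (Suc n)
  have gr: "group G" and ts: "topspace T = carrier G"
    and m: "continuous_map (prod_topology T T) T (\<lambda>(x, y). x \<otimes>\<^bsub>G\<^esub> y)"
    using assms by (auto simp: topological_group_def)
  have "continuous_map T (prod_topology T T) (\<lambda>g. (g [^]\<^bsub>G\<^esub> n, g))"
    using Suc by (simp add: continuous_map_pairwise o_def)
  then have "continuous_map T T ((\<lambda>(x, y). x \<otimes>\<^bsub>G\<^esub> y) \<circ> (\<lambda>g. (g [^]\<^bsub>G\<^esub> n, g)))"
    using m continuous_map_compose by blast
  then show ?case by (simp add: o_def)
qed

lemma not_conv:
  assumes "topological_group H T" "Hausdorff_space T" "x \<in> carrier H" "x \<noteq> \<one>\<^bsub>H\<^esub>"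
  shows "\<exists>W. openin T W \<and> \<one>\<^bsub>H\<^esub> \<in> W \<and> infinite {n::nat. x [^]\<^bsub>H\<^esub> n \<notin> W}"
proof (rule ccontr)
  assume "\<not> ?thesis"
  hence fin: "\<And>W. openin T W \<Longrightarrow> \<one>\<^bsub>H\<^esub> \<in> W \<Longrightarrow> finite {n::nat. x [^]\<^bsub>H\<^esub> n \<notin> W}" by blast
  have gr: "group H" and ts: "topspace T = carrier H"
    and m: "continuous_map (prod_topology T T) T (\<lambda>(x, y). x \<otimes>\<^bsub>H\<^esub> y)"
    and iv: "continuous_map T T (\<lambda>x. inv\<^bsub>H\<^esub> x)"
    using assms by (auto simp: topological_group_def)
  have one: "\<one>\<^bsub>H\<^esub> \<in> topspace T" using gr ts by (simp add: group.is_monoid monoid.one_closed)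
  have L: "limitin T (\<lambda>n. x [^]\<^bsub>H\<^esub> n) \<one>\<^bsub>H\<^esub> sequentially"
    unfolding limitin_def using one fin
    by (auto simp: cofinite_eq_sequentially[symmetric] eventually_cofinite)
  have L1: "limitin T (\<lambda>n. x [^]\<^bsub>H\<^esub> (n + 1)) \<one>\<^bsub>H\<^esub> sequentially"
    using limitin_sequentially_offset[OF L] .
  have L2: "limitin T (\<lambda>n. inv\<^bsub>H\<^esub> (x [^]\<^bsub>H\<^esub> n)) (inv\<^bsub>H\<^esub> \<one>\<^bsub>H\<^esub>) sequentially"
    using continuous_map_limit[OF iv L] by (simp add: o_def)
  have L3: "limitin (prod_topology T T) (\<lambda>n. (x [^]\<^bsub>H\<^esub> (n + 1), inv\<^bsub>H\<^esub> (x [^]\<^bsub>H\<^esub> n))) (\<one>\<^bsub>H\<^esub>, inv\<^bsub>H\<^esub> \<one>\<^bsub>H\<^esub>) sequentially"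
    using L1 L2 by (simp add: limitin_pairwise o_def)
  note L4 = continuous_map_limit[OF m L3]
  have eq: "x [^]\<^bsub>H\<^esub> (Suc (n::nat)) \<otimes>\<^bsub>H\<^esub> inv\<^bsub>H\<^esub> (x [^]\<^bsub>H\<^esub> n) = x" for n
  proof -
    interpret group H by (fact gr)
    have e: "x [^]\<^bsub>H\<^esub> (Suc n) = x \<otimes>\<^bsub>H\<^esub> x [^]\<^bsub>H\<^esub> n"
      by (rule nat_pow_Suc2[OF assms(3)])
    show ?thesis unfolding e using assms(3) by (simp add: m_assoc)
  qed
  have A1: "limitin T (\<lambda>n. x) \<one>\<^bsub>H\<^esub> sequentially"
    using L4 gr by (simp del: nat_pow_Suc add: o_def eq group.is_monoid monoid.inv_one monoid.one_closed monoid.l_one)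
  have A2: "limitin T (\<lambda>n. x) x sequentially" using assms(3) ts by simp
  have "x = \<one>\<^bsub>H\<^esub>"
    by (rule limitin_Hausdorff_unique[OF A2 A1]) (simp_all add: assms(2))
  with assms(4) show False by simp
qed


lemma nonempty_open_not_meager:
  assumes "completely_metrizable_space X" "openin X U" "U \<noteq> {}"
  shows "\<not> meager X U"
proof
  assume "meager X U"
  then obtain F where F: "countable F" "\<forall>N\<in>F. nowhere_dense X N" "U \<subseteq> \<Union>F"
    by (auto simp: meager_def)
  have "X interior_of \<Union>((\<lambda>N. X closure_of N) ` F) = {}"
    by (rule Baire_category_alt) (use assms F in \<open>auto simp: nowhere_dense_def\<close>)
  moreover have "U \<subseteq> \<Union>((\<lambda>N. X closure_of N) ` F)"
  proof
    fix x assume "x \<in> U"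
    then obtain N where "N \<in> F" "x \<in> N" using F by blast
    moreover have "x \<in> topspace X" using \<open>x \<in> U\<close> assms(2) openin_subset by blast
    ultimately show "x \<in> \<Union>((\<lambda>N. X closure_of N) ` F)"
      using closure_of_subset_Int[of X N] by blast
  qed
  then have "U \<subseteq> X interior_of \<Union>((\<lambda>N. X closure_of N) ` F)"
    using assms(2) interior_of_maximal by blast
  ultimately show False using assms(3) by blast
qed

lemma subseq_exists:
  fixes I :: "nat set" and f :: "nat \<Rightarrow> 'a"
  assumes "Metric_space M d" "l \<in> M"
    and "\<forall>m N. \<exists>n\<in>I. N \<le> n \<and> f n \<in> M \<and> d l (f n) < 1 / real (Suc m)"
  shows "\<exists>k. strict_mono k \<and> range k \<subseteq> I \<and> limitin (Metric_space.mtopology M d) (\<lambda>j. f (k j)) l sequentially"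
proof -
  interpret Metric_space M d by fact
  obtain c :: "nat \<Rightarrow> nat \<Rightarrow> nat" where c: "\<And>m N. c m N \<in> I \<and> N \<le> c m N \<and> f (c m N) \<in> M \<and> d l (f (c m N)) < 1 / real (Suc m)"
    using assms(3) by metis
  define k where "k = rec_nat (c 0 0) (\<lambda>j kj. c (Suc j) (Suc kj))"
  have k0: "k 0 = c 0 0" and kS: "k (Suc j) = c (Suc j) (Suc (k j))" for j by (simp_all add: k_def)
  have kc: "\<exists>N. k j = c j N" for j by (cases j) (auto simp: k0 kS)
  have P: "k j \<in> I \<and> f (k j) \<in> M \<and> d l (f (k j)) < 1 / real (Suc j)" for j
  proof -
    obtain N where "k j = c j N" using kc by blast
    then show ?thesis using c[of j N] by simp
  qed
  have "strict_mono k"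
    unfolding strict_mono_Suc_iff
  proof
    fix n
    show "k n < k (Suc n)" using c[of "Suc n" "Suc (k n)"] by (simp add: kS)
  qed
  moreover have "range k \<subseteq> I" using P by auto
  moreover have "limitin mtopology (\<lambda>j. f (k j)) l sequentially"
    unfolding limitin_metric
  proof (intro conjI allI impI)
    show "l \<in> M" by fact
    fix e :: real assume "e > 0"
    then obtain N :: nat where N: "N > 0" "inverse (real N) < e" using ex_inverse_of_nat_less by blast
    show "\<forall>\<^sub>F x in sequentially. f (k x) \<in> M \<and> d (f (k x)) l < e"
      unfolding eventually_sequentially
    proof (intro exI allI impI)
      fix j assume "N \<le> j"
      have le: "1 / real (Suc j) \<le> 1 / real N"
        by (rule divide_left_mono) (use \<open>N \<le> j\<close> N(1) in auto)
      have "inverse (real N) = 1 / real N" by (simp add: inverse_eq_divide)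
      moreover have "d (f (k j)) l = d l (f (k j))" by (rule commute)
      moreover note P[of j]
      ultimately show "f (k j) \<in> M \<and> d (f (k j)) l < e"
        using le N(2) by linarith
    qed
  qed
  ultimately show ?thesis by blast
qed

theorem lemma4p1:
  fixes G :: "('a, 'm) monoid_scheme" and TG :: "'a topology"
    and H :: "('b, 'n) monoid_scheme" and TH :: "'b topology"
    and \<phi> :: "'a \<Rightarrow> 'b" and E :: "('a \<times> 'a) set"
  assumes "Polish_group G TG" and "Polish_group H TH"
    and "Rosendal_property G TG"
    and "\<phi> \<in> hom G H" and "continuous_map TG TH \<phi>"
    and "\<phi> ` carrier G \<noteq> {\<one>\<^bsub>H\<^esub>}"
    and "equiv (carrier G) E"
    and "\<And>I :: nat set. infinite I \<Longrightarrow>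
           E_invariant (carrier G) E
             {g \<in> carrier G. \<exists>k :: nat \<Rightarrow> nat. strict_mono k \<and> range k \<subseteq> I \<and>
                limitin TH (\<lambda>n. \<phi> g [^]\<^bsub>H\<^esub> k n) \<one>\<^bsub>H\<^esub> sequentially}"
  shows "(\<forall>C \<in> carrier G // E. TG closure_of C = topspace TG \<longrightarrow> meager TG C)
         \<and> (\<forall>C \<in> carrier G // E. \<not> comeager TG C)"
proof -
  have tgG: "topological_group G TG" and PG: "Polish_space TG"
    using assms(1) by (auto simp: Polish_group_def)
  have tgH: "topological_group H TH" and PH: "Polish_space TH"
    using assms(2) by (auto simp: Polish_group_def)
  have grG: "group G" and tsG: "topspace TG = carrier G" using tgG by (auto simp: topological_group_def)
  have grH: "group H" and tsH: "topspace TH = carrier H" using tgH by (auto simp: topological_group_def)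
  have cmG: "completely_metrizable_space TG" using PG by (simp add: Polish_space_def)
  have cmH: "completely_metrizable_space TH" using PH by (simp add: Polish_space_def)
  have HausH: "Hausdorff_space TH"
    by (rule metrizable_imp_Hausdorff_space[OF completely_metrizable_imp_metrizable_space[OF cmH]])
  obtain M d where Md: "Metric_space M d" and THeq: "TH = Metric_space.mtopology M d"
    using completely_metrizable_imp_metrizable_space[OF cmH] by (auto simp: metrizable_space_def)
  have M_eq: "M = carrier H" using tsH THeq Metric_space.topspace_mtopology[OF Md] by simp
  have oneG: "\<one>\<^bsub>G\<^esub> \<in> carrier G" using grG by (simp add: group.is_monoid monoid.one_closed)
  have oneH: "\<one>\<^bsub>H\<^esub> \<in> carrier H" using grH by (simp add: group.is_monoid monoid.one_closed)
  have phi1: "\<phi> \<one>\<^bsub>G\<^esub> = \<one>\<^bsub>H\<^esub>" using hom_one[OF assms(4) grG grH] by simp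
  define Q where "Q I = {g \<in> carrier G. \<exists>k :: nat \<Rightarrow> nat. strict_mono k \<and> range k \<subseteq> I \<and>
                limitin TH (\<lambda>n. \<phi> g [^]\<^bsub>H\<^esub> k n) \<one>\<^bsub>H\<^esub> sequentially}" for I
  have key: "meager TG C \<or> C \<subseteq> Q I" if C: "C \<in> carrier G // E" and I: "infinite I" for C I
  proof (cases "C \<inter> Q I = {}")
    case False
    then obtain g where g: "g \<in> C" "g \<in> Q I" by blast
    have "E_invariant (carrier G) E (Q I)" unfolding Q_def by (rule assms(8)[OF I])
    then have "\<exists>\<C>. \<C> \<subseteq> carrier G // E \<and> Q I = \<Union>\<C>" unfolding E_invariant_def .
    then obtain \<C> where CC1: "\<C> \<subseteq> carrier G // E" and CC2: "Q I = \<Union>\<C>" by (elim exE conjE)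
    have "g \<in> \<Union>\<C>" using g(2) CC2 by simp
    then obtain C' where C': "C' \<in> \<C>" "g \<in> C'" by (rule UnionE)
    have C'q: "C' \<in> carrier G // E" using CC1 C'(1) by (rule subsetD)
    from quotient_disj[OF assms(7) C C'q] have "C = C' \<or> C \<inter> C' = {}" .
    with g(1) C'(2) have "C = C'" by blast
    moreover have "C' \<subseteq> \<Union>\<C>" using C'(1) by (rule Union_upper)
    ultimately show ?thesis using CC2 by simp
  next
    case True
    interpret Metric_space M d by (fact Md)
    define B where "B m = mball \<one>\<^bsub>H\<^esub> (1 / real (Suc m))" for m
    define V where "V m = {g \<in> topspace TG. \<phi> g \<in> B m}" for m
    define D where "D m N = {g \<in> carrier G. \<exists>n\<in>I \<inter> {N..}. g [^]\<^bsub>G\<^esub> n \<in> V m}" for m N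
    have Vopen: "openin TG (V m)" for m
    proof -
      have "openin TH (B m)" unfolding B_def THeq by simp
      then show ?thesis unfolding V_def by (rule openin_continuous_map_preimage[OF assms(5)])
    qed
    have oneV: "\<one>\<^bsub>G\<^esub> \<in> V m" for m
    proof -
      have "\<one>\<^bsub>H\<^esub> \<in> M" using oneH M_eq by simp
      then show ?thesis using oneG tsG phi1 by (simp add: V_def B_def)
    qed
    have Dopen: "openin TG (D m N)" for m N
    proof -
      have "D m N = \<Union>((\<lambda>n. {g \<in> topspace TG. g [^]\<^bsub>G\<^esub> n \<in> V m}) ` (I \<inter> {N..}))"
        unfolding D_def using tsG by auto
      moreover have "openin TG {g \<in> topspace TG. g [^]\<^bsub>G\<^esub> n \<in> V m}" for n :: nat
        by (rule openin_continuous_map_preimage[OF tg_pow_cont[OF tgG] Vopen])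
      ultimately show ?thesis by auto
    qed
    have Ddense: "TG closure_of D m N = topspace TG" for m N
    proof -
      have "I \<inter> {N..} = I - {..<N}" by auto
      then have "infinite (I \<inter> {N..})" using Diff_infinite_finite[OF _ I, of "{..<N}"] by simp
      moreover have "neighbourhood TG (V m) \<one>\<^bsub>G\<^esub>"
      proof -
        have "V m \<subseteq> topspace TG" unfolding V_def by blast
        then show ?thesis unfolding neighbourhood_def using Vopen[of m] oneV[of m] by blast
      qed
      ultimately have "TG closure_of {g \<in> carrier G. \<exists>n\<in>I \<inter> {N..}. g [^]\<^bsub>G\<^esub> n \<in> V m} = topspace TG"
        using assms(3) unfolding Rosendal_property_def by blast
      then show ?thesis unfolding D_def .
    qed
    define F where "F = (\<lambda>(m, N). topspace TG - D m N) ` (UNIV :: (nat \<times> nat) set)"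
    have "countable F" unfolding F_def by simp
    moreover have "\<forall>N\<in>F. nowhere_dense TG N"
    proof
      fix S assume "S \<in> F"
      then obtain m N where S: "S = topspace TG - D m N" unfolding F_def by auto
      have "closedin TG S" unfolding S using Dopen by blast
      then have "TG closure_of S = S" by (rule closure_of_closedin)
      then show "nowhere_dense TG S"
        unfolding nowhere_dense_def by (simp add: S interior_of_complement Ddense)
    qed
    moreover have "C \<subseteq> \<Union>F"
    proof
      fix g assume gC: "g \<in> C"
      have gG: "g \<in> carrier G" using in_quotient_imp_subset[OF assms(7) C] gC by blast
      have "g \<notin> Q I" using True gC by blast
      have "\<exists>m N. g \<notin> D m N"
      proof (rule ccontr)
        assume "\<not> ?thesis"
        then have allD: "\<And>m N. g \<in> D m N" by blast
        have "\<forall>m N. \<exists>n\<in>I. N \<le> n \<and> \<phi> g [^]\<^bsub>H\<^esub> n \<in> M \<and> d \<one>\<^bsub>H\<^esub> (\<phi> g [^]\<^bsub>H\<^esub> n) < 1 / real (Suc m)"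
        proof (intro allI)
          fix m N
          obtain n where n: "n \<in> I" "N \<le> n" "g [^]\<^bsub>G\<^esub> n \<in> V m" using allD[of m N] unfolding D_def by auto
          have "\<phi> (g [^]\<^bsub>G\<^esub> n) = \<phi> g [^]\<^bsub>H\<^esub> n" using hom_nat_pow[OF assms(4) gG grG grH] .
          then show "\<exists>n\<in>I. N \<le> n \<and> \<phi> g [^]\<^bsub>H\<^esub> n \<in> M \<and> d \<one>\<^bsub>H\<^esub> (\<phi> g [^]\<^bsub>H\<^esub> n) < 1 / real (Suc m)"
            using n unfolding V_def B_def by auto
        qed
        then have "\<exists>k. strict_mono k \<and> range k \<subseteq> I \<and> limitin TH (\<lambda>j. \<phi> g [^]\<^bsub>H\<^esub> k j) \<one>\<^bsub>H\<^esub> sequentially"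
          unfolding THeq using subseq_exists[OF Md] oneH M_eq by blast
        then obtain k where "strict_mono k" "range k \<subseteq> I"
          "limitin TH (\<lambda>j. \<phi> g [^]\<^bsub>H\<^esub> k j) \<one>\<^bsub>H\<^esub> sequentially"
          by blast
        then have "g \<in> Q I" using gG unfolding Q_def by blast
        with \<open>g \<notin> Q I\<close> show False by blast
      qed
      then obtain m N where "g \<notin> D m N" by blast
      moreover have "topspace TG - D m N \<in> F" unfolding F_def by (rule image_eqI[where x="(m,N)"]) auto
      ultimately show "g \<in> \<Union>F" using gG tsG by blast
    qed
    ultimately show ?thesis unfolding meager_def by blast
  qed
  have part1: "meager TG C" if C: "C \<in> carrier G // E" and dense: "TG closure_of C = topspace TG" for C
  proof (rule ccontr)
    assume nm: "\<not> meager TG C"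
    define K where "K = {g \<in> topspace TG. \<phi> g \<in> {\<one>\<^bsub>H\<^esub>}}"
    have Kc: "closedin TG K" unfolding K_def
      by (rule closedin_continuous_map_preimage[OF assms(5) closedin_Hausdorff_singleton[OF HausH]])
        (use oneH tsH in simp)
    have "C \<subseteq> K"
    proof
      fix g assume gC: "g \<in> C"
      have gG: "g \<in> carrier G" using in_quotient_imp_subset[OF assms(7) C] gC by blast
      have xH: "\<phi> g \<in> carrier H" using hom_in_carrier[OF assms(4) gG] .
      have "\<phi> g = \<one>\<^bsub>H\<^esub>"
      proof (rule ccontr)
        assume ne: "\<phi> g \<noteq> \<one>\<^bsub>H\<^esub>"
        have "\<exists>W. openin TH W \<and> \<one>\<^bsub>H\<^esub> \<in> W \<and> infinite {n::nat. \<phi> g [^]\<^bsub>H\<^esub> n \<notin> W}"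
          by (rule not_conv[OF tgH HausH xH ne])
        then obtain W where W1: "openin TH W" and W2: "\<one>\<^bsub>H\<^esub> \<in> W"
          and W3: "infinite {n::nat. \<phi> g [^]\<^bsub>H\<^esub> n \<notin> W}" by (elim exE conjE)
        have "meager TG C \<or> C \<subseteq> Q {n::nat. \<phi> g [^]\<^bsub>H\<^esub> n \<notin> W}" by (rule key[OF C W3])
        then have "C \<subseteq> Q {n::nat. \<phi> g [^]\<^bsub>H\<^esub> n \<notin> W}" using nm by (elim disjE) simp_all
        then have "g \<in> Q {n::nat. \<phi> g [^]\<^bsub>H\<^esub> n \<notin> W}" using gC by (rule subsetD)
        then have "\<exists>k :: nat \<Rightarrow> nat. strict_mono k \<and> range k \<subseteq> {n::nat. \<phi> g [^]\<^bsub>H\<^esub> n \<notin> W} \<and>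
                limitin TH (\<lambda>n. \<phi> g [^]\<^bsub>H\<^esub> k n) \<one>\<^bsub>H\<^esub> sequentially"
          unfolding Q_def by simp
        then obtain k :: "nat \<Rightarrow> nat" where k1: "range k \<subseteq> {n::nat. \<phi> g [^]\<^bsub>H\<^esub> n \<notin> W}"
          and k2: "limitin TH (\<lambda>n. \<phi> g [^]\<^bsub>H\<^esub> k n) \<one>\<^bsub>H\<^esub> sequentially" by (elim exE conjE)
        have "eventually (\<lambda>n. \<phi> g [^]\<^bsub>H\<^esub> k n \<in> W) sequentially"
          using k2 W1 W2 unfolding limitin_def by simp
        then obtain N where "\<forall>n\<ge>N. \<phi> g [^]\<^bsub>H\<^esub> k n \<in> W" unfolding eventually_sequentially by (elim exE)
        then have "\<phi> g [^]\<^bsub>H\<^esub> k N \<in> W" by simp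
        moreover have "k N \<in> {n::nat. \<phi> g [^]\<^bsub>H\<^esub> n \<notin> W}" using k1 by auto
        ultimately show False by simp
      qed
      then show "g \<in> K" unfolding K_def using gG tsG by simp
    qed
    then have "TG closure_of C \<subseteq> K" by (rule closure_of_minimal[OF _ Kc])
    then have "topspace TG \<subseteq> K" using dense by simp
    then have "\<forall>g\<in>carrier G. \<phi> g = \<one>\<^bsub>H\<^esub>" using tsG unfolding K_def by auto
    then have "\<phi> ` carrier G = {\<one>\<^bsub>H\<^esub>}" using oneG by auto
    with assms(6) show False by blast
  qed
  have meager_mono: "meager TG A" if mB: "meager TG B" and AB: "A \<subseteq> B" for A B
  proof -
    obtain F where F: "countable F" "\<forall>N\<in>F. nowhere_dense TG N" "B \<subseteq> \<Union>F"
      using mB unfolding meager_def by (elim exE conjE)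
    then show ?thesis using AB unfolding meager_def by (intro exI[of _ F] conjI) auto
  qed
  have part2: "\<not> comeager TG C" if C: "C \<in> carrier G // E" for C
  proof
    assume cm: "comeager TG C"
    then have Csub: "C \<subseteq> topspace TG" and mc: "meager TG (topspace TG - C)"
      by (auto simp: comeager_def)
    have dense: "TG closure_of C = topspace TG"
    proof (rule ccontr)
      assume "TG closure_of C \<noteq> topspace TG"
      then have ne: "topspace TG - TG closure_of C \<noteq> {}" using closure_of_subset_topspace[of TG C] by auto
      have op: "openin TG (topspace TG - TG closure_of C)"
        by (rule openin_diff[OF openin_topspace closedin_closure_of])
      have "topspace TG - TG closure_of C \<subseteq> topspace TG - C" using closure_of_subset[OF Csub] by blast
      then have "meager TG (topspace TG - TG closure_of C)" by (rule meager_mono[OF mc])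
      with nonempty_open_not_meager[OF cmG op ne] show False by blast
    qed
    have "meager TG C" using part1[OF C dense] .
    have "meager TG (topspace TG)"
    proof -
      obtain F1 where F1: "countable F1" "\<forall>N\<in>F1. nowhere_dense TG N" "C \<subseteq> \<Union>F1"
        using \<open>meager TG C\<close> unfolding meager_def by (elim exE conjE)
      obtain F2 where F2: "countable F2" "\<forall>N\<in>F2. nowhere_dense TG N" "topspace TG - C \<subseteq> \<Union>F2"
        using mc unfolding meager_def by (elim exE conjE)
      show ?thesis unfolding meager_def
        by (intro exI[of _ "F1 \<union> F2"] conjI) (use F1 F2 in auto)
    qed
    moreover have "topspace TG \<noteq> {}" using oneG tsG by auto
    ultimately show False using nonempty_open_not_meager[OF cmG openin_topspace] by simp
  qed
  show ?thesis using part1 part2 by simp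
qed

end
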